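(* For integers $n\ge m\ge0$ of the same parity, \[ d_{n,m}=\frac{1}{((n+m)/2)!}\,r_{(n+m)/2,(n-m)/2}, \] and $d_{n,m}=0$ when $n$ and $m$ have different parities. In particular, the number of relaxed binary trees of size $n$ equals $n!\,d_{2n,0}$.
   Context: A Dyck meander is a lattice path from $(0,0)$ with steps $U=(1,1)$, $D=(1,-1)$ never going below $y=0$; an up step starting at $(a,b)$ has weight $(a-b+2)/(a+b+2)$, a meander's weight is the product of its up-step weights, and $d_{n,m}$ is the total weight of meanders ending at $(n,m)$. A horizontally decorated path is a lattice path from $(0,0)$ with steps $H=(1,0)$, $V=(0,1)$ in the region $0\le y\le x$, each $H$ step decorated by a number in $\{1,\dots,k+1\}$ where $k$ is its $y$-coordinate; $r_{a,b}$ is the number of horizontally decorated paths ending at $(a,b)$. A relaxed binary tree of size $n$ is obtained from a rooted plane binary tree with $n$ internal nodes (its spine) by keeping the left-most leaf and turning every other leaf $\ell$ into a pointer to a vertex (an internal node or the left-most leaf) preceding $\ell$ in postorder (left subtree, right subtree, root); two relaxed trees are equal iff they have the same spine and the same pointer targets. *)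

theory Defs
  imports Complex_Main
begin

text \<open>A path of U/D steps is a list of booleans (True = U = (1,1), False = D = (1,-1)).\<close>

fun hgt :: "bool list \<Rightarrow> int" where
  "hgt [] = 0"
| "hgt (s # p) = (if s then 1 else -1) + hgt p"

definition meander :: "bool list \<Rightarrow> bool" where
  "meander p \<longleftrightarrow> (\<forall>i \<le> length p. hgt (take i p) \<ge> 0)"

text \<open>The i-th step starts at (i, hgt (take i p)); an up step starting at (a,b)
  has weight (a-b+2)/(a+b+2); the meander weight is the product over up steps.\<close>
definition mweight :: "bool list \<Rightarrow> real" where
  "mweight p = (\<Prod>i<length p. if p ! i
      then (real i - real_of_int (hgt (take i p)) + 2) / (real i + real_of_int (hgt (take i p)) + 2)
      else 1)"

definition dnm :: "nat \<Rightarrow> nat \<Rightarrow> real" where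
  "dnm n m = (\<Sum>p \<in> {p. length p = n \<and> meander p \<and> hgt p = int m}. mweight p)"

text \<open>A decorated path is a list of steps: None = V = (0,1), Some j = H = (1,0)
  decorated by j. Before step i the position is (#H in take i, #V in take i).\<close>

definition nH :: "nat option list \<Rightarrow> nat" where
  "nH p = length (filter (\<lambda>s. s \<noteq> None) p)"

definition nV :: "nat option list \<Rightarrow> nat" where
  "nV p = length (filter (\<lambda>s. s = None) p)"

definition hdec_path :: "nat option list \<Rightarrow> bool" where
  "hdec_path p \<longleftrightarrow>
     (\<forall>i \<le> length p. nV (take i p) \<le> nH (take i p)) \<and>
     (\<forall>i < length p. \<forall>j. p ! i = Some j \<longrightarrow> j \<in> {1 .. nV (take i p) + 1})"

definition rab :: "nat \<Rightarrow> nat \<Rightarrow> nat" where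
  "rab a b = card {p. hdec_path p \<and> nH p = a \<and> nV p = b}"

datatype bt = L | N bt bt

fun isize :: "bt \<Rightarrow> nat" where
  "isize L = 0"
| "isize (N l r) = Suc (isize l + isize r)"

text \<open>Positions of all vertices (internal nodes and leaves), as paths from the root
  (False = left, True = right), listed in postorder (left subtree, right subtree, root).\<close>
fun postorder :: "bt \<Rightarrow> bool list list" where
  "postorder L = [[]]"
| "postorder (N l r) = map (Cons False) (postorder l) @ map (Cons True) (postorder r) @ [[]]"

fun leaves :: "bt \<Rightarrow> bool list list" where
  "leaves L = [[]]"
| "leaves (N l r) = map (Cons False) (leaves l) @ map (Cons True) (leaves r)"

fun inner :: "bt \<Rightarrow> bool list list" where
  "inner L = []"
| "inner (N l r) = map (Cons False) (inner l) @ map (Cons True) (inner r) @ [[]]"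

fun leftmost :: "bt \<Rightarrow> bool list" where
  "leftmost L = []"
| "leftmost (N l r) = False # leftmost l"

definition precedes :: "bt \<Rightarrow> bool list \<Rightarrow> bool list \<Rightarrow> bool" where
  "precedes t v w \<longleftrightarrow> (\<exists>i j. i < j \<and> j < length (postorder t) \<and>
      postorder t ! i = v \<and> postorder t ! j = w)"

text \<open>A relaxed binary tree: a spine t together with a pointer map defined exactly on the
  leaves other than the left-most one, sending each such leaf to an internal node or
  the left-most leaf preceding it in postorder.\<close>
definition relaxed_trees :: "nat \<Rightarrow> (bt \<times> (bool list \<Rightarrow> bool list option)) set" where
  "relaxed_trees n = {(t, f). isize t = n \<and>
      dom f = set (leaves t) - {leftmost t} \<and>
      (\<forall>l v. f l = Some v \<longrightarrow>
          (v \<in> set (inner t) \<or> v = leftmost t) \<and> precedes t v l)}"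

end

theory Submission
  imports Defs "HOL-Library.FuncSet"
begin

fun R :: "nat \<Rightarrow> nat \<Rightarrow> nat" where
  "R 0 0 = 1"
| "R 0 (Suc b) = 0"
| "R (Suc a) 0 = R a 0"
| "R (Suc a) (Suc b) = (if b \<le> a then (b+2) * R a (Suc b) + R (Suc a) b else 0)"

lemma R_zero: "a < b \<Longrightarrow> R a b = 0"
  by (induction a b rule: R.induct) auto

lemma R_rec: "0 < a \<Longrightarrow> R a b = (if b \<le> a then (b+1) * R (a-1) b + (if 0 < b then R a (b-1) else 0) else 0)"
  by (cases a; cases b) auto

lemma all_take_snoc:
  "(\<forall>i \<le> length (p@[s]). P (take i (p@[s]))) \<longleftrightarrow> (\<forall>i \<le> length p. P (take i p)) \<and> P (p@[s])"
  by (auto simp: le_Suc_eq)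

lemma all_nth_snoc:
  "(\<forall>i < length (p@[s]). Q i ((p@[s])!i) (take i (p@[s]))) \<longleftrightarrow> (\<forall>i<length p. Q i (p!i) (take i p)) \<and> Q (length p) s p"
  by (auto simp: less_Suc_eq nth_append)

lemma hgt_append: "hgt (p @ q) = hgt p + hgt q"
  by (induction p) auto

lemma hgt_bound: "hgt p \<le> int (length p) \<and> even (int (length p) + hgt p)"
  by (induction p) auto

definition MP :: "nat \<Rightarrow> nat \<Rightarrow> bool list set" where
  "MP n m = {p. length p = n \<and> meander p \<and> hgt p = int m}"

lemma meander_snoc: "meander (p @ [s]) \<longleftrightarrow> meander p \<and> hgt (p @ [s]) \<ge> 0"
  unfolding meander_def using all_take_snoc[of p s "\<lambda>q. hgt q \<ge> 0"] by simp

lemma meander_nonneg: "meander p \<Longrightarrow> hgt p \<ge> 0"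
  unfolding meander_def by (metis order.refl take_all)

lemma mweight_snoc: "mweight (p @ [s]) = mweight p *
   (if s then (real (length p) - real_of_int (hgt p) + 2) / (real (length p) + real_of_int (hgt p) + 2) else 1)"
proof -
  have "mweight (p @ [s]) = (\<Prod>i<length p. if (p@[s]) ! i
      then (real i - real_of_int (hgt (take i (p@[s]))) + 2) / (real i + real_of_int (hgt (take i (p@[s]))) + 2)
      else 1) * (if s then (real (length p) - real_of_int (hgt p) + 2) / (real (length p) + real_of_int (hgt p) + 2) else 1)"
    unfolding mweight_def by (simp add: nth_append)
  also have "(\<Prod>i<length p. if (p@[s]) ! i
      then (real i - real_of_int (hgt (take i (p@[s]))) + 2) / (real i + real_of_int (hgt (take i (p@[s]))) + 2)
      else 1) = mweight p"
    unfolding mweight_def by (rule prod.cong) (auto simp: nth_append)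
  finally show ?thesis .
qed

lemma MP_finite: "finite (MP n m)"
proof -
  have "MP n m \<subseteq> {p. set p \<subseteq> UNIV \<and> length p = n}" unfolding MP_def by auto
  thus ?thesis using finite_lists_length_eq[of "UNIV :: bool set" n] finite_subset by auto
qed

lemma MP_empty: assumes "n < m \<or> odd (n + m)" shows "MP n m = {}"
proof -
  { fix p assume p: "length p = n" "hgt p = int m"
    have "int m \<le> int n" using hgt_bound[of p] p by simp
    moreover have "even (int (n + m))" using hgt_bound[of p] p by simp
    ultimately have False using assms by simp }
  then show ?thesis unfolding MP_def by auto
qed

lemma dnm_MP: "dnm n m = sum mweight (MP n m)" unfolding dnm_def MP_def by simp

lemma dnm_zero: "n < m \<or> odd (n + m) \<Longrightarrow> dnm n m = 0"
  using MP_empty[of n m] by (simp add: dnm_MP)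

lemma MP_Suc: "MP (Suc n) m = (\<lambda>p. p@[False]) ` MP n (Suc m) \<union>
    (if 0 < m then (\<lambda>p. p@[True]) ` MP n (m-1) else {})"
proof (intro equalityI subsetI)
  fix p assume "p \<in> MP (Suc n) m"
  then have p: "length p = Suc n" "meander p" "hgt p = int m" unfolding MP_def by auto
  then obtain q s where q: "p = q @ [s]" by (metis length_Suc_conv_rev)
  have mq: "meander q" using p(2) q meander_snoc by auto
  have lq: "length q = n" using p q by simp
  show "p \<in> (\<lambda>p. p@[False]) ` MP n (Suc m) \<union> (if 0 < m then (\<lambda>p. p@[True]) ` MP n (m-1) else {})"
  proof (cases s)
    case True
    then have "hgt q = int m - 1" using p(3) q hgt_append by simp
    moreover have "hgt q \<ge> 0" using mq meander_nonneg by blast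
    ultimately have "0 < m" "hgt q = int (m - 1)" by auto
    then show ?thesis using q True mq lq unfolding MP_def by auto
  next
    case False
    then have "hgt q = int (Suc m)" using p(3) q hgt_append by simp
    then show ?thesis using q False mq lq unfolding MP_def by auto
  qed
next
  fix p assume "p \<in> (\<lambda>p. p@[False]) ` MP n (Suc m) \<union> (if 0 < m then (\<lambda>p. p@[True]) ` MP n (m-1) else {})"
  then show "p \<in> MP (Suc n) m"
    unfolding MP_def by (auto simp: meander_snoc hgt_append split: if_splits)
qed

lemma dnm_Suc: "dnm (Suc n) m = dnm n (Suc m) +
   (if 0 < m then (real n - real (m-1) + 2) / (real n + real (m-1) + 2) * dnm n (m-1) else 0)"
proof -
  have inj: "\<And>x A. inj_on (\<lambda>p::bool list. p@[x]) A" by (auto simp: inj_on_def)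
  have A: "sum mweight ((\<lambda>p. p@[False]) ` MP n (Suc m)) = dnm n (Suc m)"
    by (simp add: sum.reindex[OF inj] dnm_MP mweight_snoc)
  have B: "sum mweight ((\<lambda>p. p@[True]) ` MP n (m-1)) =
     (real n - real (m-1) + 2) / (real n + real (m-1) + 2) * dnm n (m-1)"
  proof -
    define c where "c = (real n - real (m-1) + 2) / (real n + real (m-1) + 2)"
    have "sum mweight ((\<lambda>p. p@[True]) ` MP n (m-1)) = (\<Sum>p\<in>MP n (m-1). mweight p * c)"
      unfolding c_def by (simp add: sum.reindex[OF inj] mweight_snoc) (rule sum.cong, auto simp: MP_def)
    also have "\<dots> = c * dnm n (m-1)" by (simp add: dnm_MP sum_distrib_left mult.commute)
    finally show ?thesis unfolding c_def .
  qed
  show ?thesis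
  proof (cases "0 < m")
    case True
    have "dnm (Suc n) m = sum mweight ((\<lambda>p. p@[False]) ` MP n (Suc m) \<union> (\<lambda>p. p@[True]) ` MP n (m-1))"
      using True by (simp add: dnm_MP MP_Suc)
    also have "\<dots> = sum mweight ((\<lambda>p. p@[False]) ` MP n (Suc m)) + sum mweight ((\<lambda>p. p@[True]) ` MP n (m-1))"
      by (rule sum.union_disjoint) (auto simp: MP_finite)
    finally show ?thesis using A B True by simp
  next
    case False
    then show ?thesis using A by (simp add: dnm_MP MP_Suc)
  qed
qed

lemma MP_0: "MP 0 0 = {[]}"
  unfolding MP_def meander_def by auto

lemma dnm_R: "\<forall>a b. a + b = s \<longrightarrow> b \<le> a \<longrightarrow> dnm s (a-b) = real (R a b) / fact a"
proof (induction s)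
  case 0
  then show ?case by (simp add: dnm_MP MP_0 mweight_def)
next
  case (Suc n)
  show ?case
  proof (intro allI impI)
    fix a b assume ab: "a + b = Suc n" "b \<le> a"
    then have a0: "0 < a" by simp
    have T1: "dnm n (Suc (a-b)) = (if 0 < b then real (R a (b-1)) / fact a else 0)"
    proof (cases "0 < b")
      case True
      moreover have "a + (b-1) = n" "b-1 \<le> a" using True ab by auto
      ultimately have "dnm n (a - (b-1)) = real (R a (b-1)) / fact a"
        using Suc.IH by blast
      moreover have "a - (b-1) = Suc (a-b)" using True ab by simp
      ultimately show ?thesis using True by simp
    next
      case False
      then show ?thesis using ab by (simp add: dnm_zero)
    qed
    have T2: "(if 0 < a - b then (real n - real (a - b - 1) + 2) / (real n + real (a - b - 1) + 2) * dnm n (a - b - 1) else 0)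
       = real ((b+1) * R (a-1) b) / fact a"
    proof (cases "0 < a - b")
      case True
      moreover have "(a-1) + b = n" "b \<le> a-1" using True ab by auto
      ultimately have "dnm n ((a-1) - b) = real (R (a-1) b) / fact (a-1)"
        using Suc.IH by blast
      moreover have "(a-1) - b = a - b - 1" by simp
      ultimately have D: "dnm n (a - b - 1) = real (R (a-1) b) / fact (a-1)" by simp
      have e1: "real n - real (a - b - 1) + 2 = 2 * (real b + 1)" using True ab by (simp add: of_nat_diff)
      have e2: "real n + real (a - b - 1) + 2 = 2 * real a" using True ab by (simp add: of_nat_diff)
      have fa: "(fact a :: real) = real a * fact (a-1)" using a0 by (simp add: fact_reduce)
      have "(if 0 < a - b then (real n - real (a - b - 1) + 2) / (real n + real (a - b - 1) + 2) * dnm n (a - b - 1) else 0)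
         = (2 * (real b + 1)) / (2 * real a) * (real (R (a-1) b) / fact (a-1))"
        using True by (simp only: e1 e2 D if_True)
      also have "\<dots> = real ((b+1) * R (a-1) b) / fact a"
        unfolding fa using a0 by (simp add: field_simps)
      finally show ?thesis .
    next
      case False
      then have "R (a-1) b = 0" using ab by (intro R_zero) simp
      then show ?thesis using False by simp
    qed
    have "dnm (Suc n) (a - b) = real (R (a-1) b * (b+1) + (if 0 < b then R a (b-1) else 0)) / fact a"
      using T1 T2 by (simp add: dnm_Suc add_divide_distrib algebra_simps)
    also have "R (a-1) b * (b+1) + (if 0 < b then R a (b-1) else 0) = R a b"
      using R_rec[OF a0, of b] ab by simp
    finally show "dnm (Suc n) (a - b) = real (R a b) / fact a" .
  qed
qed

lemma part1: "m \<le> n \<Longrightarrow> even (n + m) \<Longrightarrow> dnm n m = real (R ((n + m) div 2) ((n - m) div 2)) / fact ((n + m) div 2)"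
proof -
  assume mn: "m \<le> n" and ev: "even (n + m)"
  then obtain k where k: "n + m = 2 * k" unfolding dvd_def by blast
  have a: "(n + m) div 2 = k" using k by simp
  have "n - m = 2 * (k - m)" using k mn by simp
  then have b: "(n - m) div 2 = k - m" by simp
  have "k + (k - m) = n" "k - m \<le> k" "k - (k - m) = m" using k mn by auto
  then show ?thesis using dnm_R[of n] unfolding a b by metis
qed


definition HP :: "nat \<Rightarrow> nat \<Rightarrow> nat option list set" where
  "HP a b = {p. hdec_path p \<and> nH p = a \<and> nV p = b}"

lemma nH_snoc: "nH (p @ [s]) = nH p + (if s = None then 0 else 1)"
  by (simp add: nH_def)
lemma nV_snoc: "nV (p @ [s]) = nV p + (if s = None then 1 else 0)"
  by (simp add: nV_def)
lemma nH_nV_len: "nH p + nV p = length p"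
  unfolding nH_def nV_def by (induction p) auto

lemma hdec_snoc: "hdec_path (p @ [s]) \<longleftrightarrow> hdec_path p \<and> nV (p@[s]) \<le> nH (p@[s]) \<and>
    (\<forall>j. s = Some j \<longrightarrow> j \<in> {1 .. nV p + 1})"
  unfolding hdec_path_def
  using all_take_snoc[of p s "\<lambda>q. nV q \<le> nH q"]
        all_nth_snoc[of p s "\<lambda>i x q. \<forall>j. x = Some j \<longrightarrow> j \<in> {1 .. nV q + 1}"]
  by blast

lemma hdec_le: "hdec_path p \<Longrightarrow> nV p \<le> nH p"
  unfolding hdec_path_def by (metis order.refl take_all)

lemma HP_00: "HP 0 0 = {[]}"
proof -
  have "p = []" if "nH p = 0" "nV p = 0" for p using nH_nV_len[of p] that by simp
  moreover have "hdec_path []" "nH [] = 0" "nV [] = 0" by (simp_all add: hdec_path_def nH_def nV_def)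
  ultimately show ?thesis unfolding HP_def by auto
qed

lemma HP_gt: "a < b \<Longrightarrow> HP a b = {}"
  unfolding HP_def using hdec_le by fastforce

lemma HP_dec:
  assumes "0 < a + b" "b \<le> a"
  shows "HP a b = (if 0 < b then (\<lambda>p. p@[None]) ` HP a (b-1) else {}) \<union>
     (if 0 < a then (\<lambda>(p,j). p@[Some j]) ` (HP (a-1) b \<times> {1..b+1}) else {})"
proof (intro equalityI subsetI)
  fix p assume "p \<in> HP a b"
  then have p: "hdec_path p" "nH p = a" "nV p = b" unfolding HP_def by auto
  have "p \<noteq> []" using p assms by (auto simp: nH_def nV_def)
  then obtain q s where q: "p = q @ [s]" by (metis rev_exhaust)
  have hq: "hdec_path q" "\<forall>j. s = Some j \<longrightarrow> j \<in> {1 .. nV q + 1}" using p(1) q hdec_snoc by auto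
  show "p \<in> (if 0 < b then (\<lambda>p. p@[None]) ` HP a (b-1) else {}) \<union>
     (if 0 < a then (\<lambda>(p,j). p@[Some j]) ` (HP (a-1) b \<times> {1..b+1}) else {})"
  proof (cases s)
    case None
    then have "nV q = b - 1" "0 < b" "nH q = a" using p q by (auto simp: nH_snoc nV_snoc)
    then show ?thesis using q None hq unfolding HP_def by auto
  next
    case (Some j)
    then have "nV q = b" "0 < a" "nH q = a - 1" using p q by (auto simp: nH_snoc nV_snoc)
    then have "(q, j) \<in> HP (a-1) b \<times> {1..b+1}" using hq Some unfolding HP_def by auto
    then show ?thesis using q Some \<open>0 < a\<close> by force
  qed
next
  fix p assume "p \<in> (if 0 < b then (\<lambda>p. p@[None]) ` HP a (b-1) else {}) \<union>
     (if 0 < a then (\<lambda>(p,j). p@[Some j]) ` (HP (a-1) b \<times> {1..b+1}) else {})"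
  then show "p \<in> HP a b" using assms
    unfolding HP_def by (auto simp: hdec_snoc nH_snoc nV_snoc split: if_splits)
qed

lemma HP_card: "\<forall>a b. a + b = s \<longrightarrow> finite (HP a b) \<and> card (HP a b) = R a b"
proof (induction s)
  case 0
  then show ?case by (simp add: HP_00)
next
  case (Suc n)
  show ?case
  proof (intro allI impI)
    fix a b assume ab: "a + b = Suc n"
    show "finite (HP a b) \<and> card (HP a b) = R a b"
    proof (cases "b \<le> a")
      case False
      then show ?thesis by (simp add: HP_gt R_zero)
    next
      case True
      then have a0: "0 < a" using ab by simp
      define A where "A = (if 0 < b then (\<lambda>p. p@[None]) ` HP a (b-1) else {})"
      define B where "B = (\<lambda>(p,j). p@[Some j]) ` (HP (a-1) b \<times> {1..b+1})"
      have HPe: "HP a b = A \<union> B" using HP_dec[of a b] True a0 ab unfolding A_def B_def by simp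
      have IH1: "0 < b \<Longrightarrow> finite (HP a (b-1)) \<and> card (HP a (b-1)) = R a (b-1)"
        using Suc.IH ab by (metis One_nat_def Suc_pred add_Suc_right nat.inject)
      have IH2: "finite (HP (a-1) b) \<and> card (HP (a-1) b) = R (a-1) b"
        using Suc.IH ab a0 by (metis One_nat_def Suc_pred add_Suc nat.inject)
      have injA: "inj_on (\<lambda>p::nat option list. p@[None]) X" for X by (auto simp: inj_on_def)
      have injB: "inj_on (\<lambda>(p,j). p@[Some j]) X" for X by (auto simp: inj_on_def)
      have fA: "finite A" "card A = (if 0 < b then R a (b-1) else 0)"
        unfolding A_def using IH1 by (auto simp: card_image[OF injA])
      have fB: "finite B" "card B = R (a-1) b * (b+1)"
        unfolding B_def using IH2 by (auto simp: card_image[OF injB] card_cartesian_product)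
      have disj: "A \<inter> B = {}" unfolding A_def B_def by auto
      have "card (HP a b) = card A + card B" unfolding HPe using fA fB disj by (simp add: card_Un_disjoint)
      then have "card (HP a b) = R a b" using fA fB R_rec[OF a0, of b] True by (simp add: algebra_simps)
      then show ?thesis using HPe fA fB by simp
    qed
  qed
qed

lemma rab_R: "rab a b = R a b"
  using HP_card[of "a+b"] unfolding rab_def HP_def by simp


definition precl :: "'a list \<Rightarrow> 'a \<Rightarrow> 'a \<Rightarrow> bool" where
  "precl xs v w \<longleftrightarrow> (\<exists>i j. i < j \<and> j < length xs \<and> xs ! i = v \<and> xs ! j = w)"

lemma precedes_precl: "precedes t v w = precl (postorder t) v w"
  by (simp add: precedes_def precl_def)

lemma precl_set: "precl xs v w \<Longrightarrow> v \<in> set xs \<and> w \<in> set xs"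
  unfolding precl_def by auto

lemma precl_single: "\<not> precl [x] v w"
  unfolding precl_def by auto

lemma precl_Cons_first: "w \<in> set xs \<Longrightarrow> precl (v # xs) v w"
  unfolding precl_def by (metis in_set_conv_nth length_Cons not_less_eq nth_Cons_0 nth_Cons_Suc zero_less_Suc)

lemma precl_append: "precl (xs @ ys) v w \<longleftrightarrow> precl xs v w \<or> precl ys v w \<or> (v \<in> set xs \<and> w \<in> set ys)"
proof
  assume "precl (xs @ ys) v w"
  then obtain i j where ij: "i < j" "j < length (xs@ys)" "(xs@ys) ! i = v" "(xs@ys) ! j = w"
    unfolding precl_def by blast
  show "precl xs v w \<or> precl ys v w \<or> (v \<in> set xs \<and> w \<in> set ys)"
  proof (cases "j < length xs")
    case True
    then have "precl xs v w" using ij unfolding precl_def by (metis nth_append order.strict_trans)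
    then show ?thesis by blast
  next
    case False
    show ?thesis
    proof (cases "i < length xs")
      case True
      then have "v \<in> set xs" "w \<in> set ys" using ij False by (auto simp: nth_append)
      then show ?thesis by blast
    next
      case False2: False
      have "precl ys v w" unfolding precl_def
        apply (rule exI[of _ "i - length xs"], rule exI[of _ "j - length xs"])
        using ij False False2 by (auto simp: nth_append)
      then show ?thesis by blast
    qed
  qed
next
  assume "precl xs v w \<or> precl ys v w \<or> (v \<in> set xs \<and> w \<in> set ys)"
  then show "precl (xs @ ys) v w"
  proof (elim disjE conjE)
    assume "precl xs v w"
    then obtain i j where ij: "i < j" "j < length xs" "xs ! i = v" "xs ! j = w"
      unfolding precl_def by blast
    then show ?thesis unfolding precl_def
      by (intro exI[of _ i] exI[of _ j]) (auto simp: nth_append)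
  next
    assume "precl ys v w"
    then obtain i j where ij: "i < j" "j < length ys" "ys ! i = v" "ys ! j = w"
      unfolding precl_def by blast
    then show ?thesis unfolding precl_def
      by (intro exI[of _ "i + length xs"] exI[of _ "j + length xs"]) (auto simp: nth_append)
  next
    assume "v \<in> set xs" "w \<in> set ys"
    then obtain i j where ij: "i < length xs" "xs ! i = v" "j < length ys" "ys ! j = w"
      by (auto simp: in_set_conv_nth)
    then show ?thesis unfolding precl_def
      by (intro exI[of _ i] exI[of _ "j + length xs"]) (auto simp: nth_append)
  qed
qed

lemma precl_map: assumes "inj f" shows "precl (map f xs) (f v) (f w) \<longleftrightarrow> precl xs v w"
proof
  assume "precl (map f xs) (f v) (f w)"
  then obtain i j where "i < j" "j < length xs" "f (xs ! i) = f v" "f (xs ! j) = f w"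
    unfolding precl_def by auto
  then show "precl xs v w" unfolding precl_def using assms by (auto simp: inj_eq)
next
  assume "precl xs v w"
  then obtain i j where "i < j" "j < length xs" "xs ! i = v" "xs ! j = w"
    unfolding precl_def by auto
  then show "precl (map f xs) (f v) (f w)" unfolding precl_def
    by (intro exI[of _ i] exI[of _ j]) auto
qed

lemma precl_map_notin: "v \<notin> f ` set xs \<Longrightarrow> \<not> precl (map f xs) v w"
  using precl_set by fastforce


lemma inner_len: "length (inner t) = isize t"
  by (induction t) auto

lemma inner_distinct: "distinct (inner t)"
  by (induction t) (auto simp: distinct_map inj_on_def)

lemma card_inner: "card (set (inner t)) = isize t"
  using distinct_card[OF inner_distinct] inner_len by simp

lemma post_set: "set (postorder t) = set (leaves t) \<union> set (inner t)"
  by (induction t) auto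

lemma lm_leaves: "leftmost t \<in> set (leaves t)"
  by (induction t) auto

lemma leaves_inner_disj: "set (leaves t) \<inter> set (inner t) = {}"
  by (induction t) auto

lemma lm_notin_inner: "leftmost t \<notin> set (inner t)"
  using lm_leaves leaves_inner_disj by blast

lemma post_hd: "\<exists>rest. postorder t = leftmost t # rest"
  by (induction t) auto

definition I :: "bt \<Rightarrow> bool list \<Rightarrow> nat" where
  "I t l = card {v \<in> set (inner t). precedes t v l}"

lemma I_L: "I L l = 0"
  by (simp add: I_def)

lemma I_NF: "I (N l r) (False # x) = I l x"
proof -
  have "{v \<in> set (inner (N l r)). precedes (N l r) v (False # x)} =
        Cons False ` {v \<in> set (inner l). precedes l v x}"
    by (auto simp: precedes_precl precl_append precl_map precl_single dest: precl_set)
  then show ?thesis unfolding I_def by (simp add: card_image)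
qed

lemma I_NT: assumes "x \<in> set (postorder r)" shows "I (N l r) (True # x) = isize l + I r x"
proof -
  have "{v \<in> set (inner (N l r)). precedes (N l r) v (True # x)} =
        Cons False ` set (inner l) \<union> Cons True ` {v \<in> set (inner r). precedes r v x}"
    using assms post_set[of l]
    by (auto simp: precedes_precl precl_append precl_map precl_single dest: precl_set)
  moreover have "card (Cons False ` set (inner l) \<union> Cons True ` {v \<in> set (inner r). precedes r v x})
     = isize l + I r x"
    by (subst card_Un_disjoint) (auto simp: card_image card_inner I_def)
  ultimately show ?thesis unfolding I_def by simp
qed

fun G :: "bt \<Rightarrow> nat \<Rightarrow> bool \<Rightarrow> nat" where
  "G L k f = (if f then 1 else k + 1)"
| "G (N l r) k f = G l k f * G r (k + isize l) False"

lemma G_prod: "G t k f = (\<Prod>x \<in> set (leaves t) - (if f then {leftmost t} else {}). k + 1 + I t x)"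
proof (induction t arbitrary: k f)
  case L
  then show ?case by (simp add: I_L)
next
  case (N l r)
  let ?El = "if f then {leftmost l} else {}"
  have S: "set (leaves (N l r)) - (if f then {leftmost (N l r)} else {}) =
     Cons False ` (set (leaves l) - ?El) \<union> Cons True ` set (leaves r)"
    by auto
  have "(\<Prod>x \<in> set (leaves (N l r)) - (if f then {leftmost (N l r)} else {}). k + 1 + I (N l r) x)
     = (\<Prod>x \<in> Cons False ` (set (leaves l) - ?El). k + 1 + I (N l r) x) *
       (\<Prod>x \<in> Cons True ` set (leaves r). k + 1 + I (N l r) x)"
    unfolding S by (rule prod.union_disjoint) auto
  also have "(\<Prod>x \<in> Cons False ` (set (leaves l) - ?El). k + 1 + I (N l r) x) = G l k f"
    by (simp add: prod.reindex N.IH I_NF)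
  also have "(\<Prod>x \<in> Cons True ` set (leaves r). k + 1 + I (N l r) x) = G r (k + isize l) False"
    using post_set[of r] by (simp add: prod.reindex N.IH I_NT add.assoc)
  finally show ?case by simp
qed


definition PM :: "bt \<Rightarrow> (bool list \<Rightarrow> bool list option) set" where
  "PM t = {f. dom f = set (leaves t) - {leftmost t} \<and>
      (\<forall>l v. f l = Some v \<longrightarrow> (v \<in> set (inner t) \<or> v = leftmost t) \<and> precedes t v l)}"

definition Tg :: "bt \<Rightarrow> bool list \<Rightarrow> bool list set" where
  "Tg t l = {v. (v \<in> set (inner t) \<or> v = leftmost t) \<and> precedes t v l}"

lemma PM_bij: "bij_betw (\<lambda>f. restrict (\<lambda>x. the (f x)) (set (leaves t) - {leftmost t})) (PM t)
   (PiE (set (leaves t) - {leftmost t}) (Tg t))"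
proof (rule bij_betw_byWitness[where f' = "\<lambda>g x. if x \<in> set (leaves t) - {leftmost t} then Some (g x) else None"])
  show "\<forall>f\<in>PM t. (\<lambda>x. if x \<in> set (leaves t) - {leftmost t}
        then Some (restrict (\<lambda>x. the (f x)) (set (leaves t) - {leftmost t}) x) else None) = f"
  proof
    fix f assume f: "f \<in> PM t"
    show "(\<lambda>x. if x \<in> set (leaves t) - {leftmost t}
        then Some (restrict (\<lambda>x. the (f x)) (set (leaves t) - {leftmost t}) x) else None) = f"
    proof
      fix x
      have D: "dom f = set (leaves t) - {leftmost t}" using f unfolding PM_def by blast
      show "(if x \<in> set (leaves t) - {leftmost t}
        then Some (restrict (\<lambda>x. the (f x)) (set (leaves t) - {leftmost t}) x) else None) = f x"
      proof (cases "x \<in> set (leaves t) - {leftmost t}")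
        case True
        then have "x \<in> dom f" using D by simp
        then show ?thesis using True by auto
      next
        case False
        then have "x \<notin> dom f" using D by simp
        then show ?thesis using False by (simp add: domIff)
      qed
    qed
  qed
  show "\<forall>g\<in>PiE (set (leaves t) - {leftmost t}) (Tg t).
     restrict (\<lambda>x. the (if x \<in> set (leaves t) - {leftmost t} then Some (g x) else None)) (set (leaves t) - {leftmost t}) = g"
    by (auto simp: PiE_def extensional_def restrict_def)
  show "(\<lambda>f. restrict (\<lambda>x. the (f x)) (set (leaves t) - {leftmost t})) ` PM t
      \<subseteq> PiE (set (leaves t) - {leftmost t}) (Tg t)"
  proof
    fix g assume "g \<in> (\<lambda>f. restrict (\<lambda>x. the (f x)) (set (leaves t) - {leftmost t})) ` PM t"
    then obtain f where f: "f \<in> PM t" and g: "g = restrict (\<lambda>x. the (f x)) (set (leaves t) - {leftmost t})"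
      by blast
    show "g \<in> PiE (set (leaves t) - {leftmost t}) (Tg t)"
    proof (rule PiE_I)
      fix x assume x: "x \<in> set (leaves t) - {leftmost t}"
      then obtain v where "f x = Some v" using f unfolding PM_def by blast
      then show "g x \<in> Tg t x" using f x g unfolding PM_def Tg_def by auto
    next
      fix x assume "x \<notin> set (leaves t) - {leftmost t}"
      then show "g x = undefined" unfolding g restrict_def by (rule if_not_P)
    qed
  qed
  show "(\<lambda>g x. if x \<in> set (leaves t) - {leftmost t} then Some (g x) else None) `
      PiE (set (leaves t) - {leftmost t}) (Tg t) \<subseteq> PM t"
  proof
    fix f assume "f \<in> (\<lambda>g x. if x \<in> set (leaves t) - {leftmost t} then Some (g x) else None) `
      PiE (set (leaves t) - {leftmost t}) (Tg t)"
    then obtain g where g: "g \<in> PiE (set (leaves t) - {leftmost t}) (Tg t)"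
      and f: "f = (\<lambda>x. if x \<in> set (leaves t) - {leftmost t} then Some (g x) else None)" by blast
    have "dom f = set (leaves t) - {leftmost t}" unfolding f dom_def by auto
    moreover have "(v \<in> set (inner t) \<or> v = leftmost t) \<and> precedes t v l" if "f l = Some v" for l v
    proof -
      have "l \<in> set (leaves t) - {leftmost t}" "v = g l" using that unfolding f by (auto split: if_splits)
      then have "v \<in> Tg t l" using g by auto
      then show ?thesis unfolding Tg_def by blast
    qed
    ultimately show "f \<in> PM t" unfolding PM_def by blast
  qed
qed

lemma Tg_card: assumes "x \<in> set (leaves t) - {leftmost t}" shows "card (Tg t x) = 1 + I t x"
proof -
  obtain rest where po: "postorder t = leftmost t # rest" using post_hd by blast
  have "x \<in> set (postorder t)" using assms post_set by auto
  then have "x \<in> set rest" using po assms by auto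
  then have "precedes t (leftmost t) x" unfolding precedes_precl po by (rule precl_Cons_first)
  then have "Tg t x = insert (leftmost t) {v \<in> set (inner t). precedes t v x}"
    unfolding Tg_def by auto
  then show ?thesis unfolding I_def using lm_notin_inner[of t] by simp
qed

lemma PM_card: "finite (PM t) \<and> card (PM t) = G t 0 True"
proof -
  have fin: "finite (Tg t x)" for x
  proof -
    have "Tg t x \<subseteq> insert (leftmost t) (set (inner t))" unfolding Tg_def by auto
    then show ?thesis using finite_subset by blast
  qed
  have "card (PM t) = card (PiE (set (leaves t) - {leftmost t}) (Tg t))"
    using PM_bij bij_betw_same_card by blast
  also have "\<dots> = (\<Prod>x \<in> set (leaves t) - {leftmost t}. card (Tg t x))" by (simp add: card_PiE)
  also have "\<dots> = (\<Prod>x \<in> set (leaves t) - {leftmost t}. 0 + 1 + I t x)"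
    by (rule prod.cong) (auto simp: Tg_card)
  also have "\<dots> = G t 0 True" by (simp only: G_prod if_True)
  finally have "card (PM t) = G t 0 True" .
  moreover have "finite (PiE (set (leaves t) - {leftmost t}) (Tg t))"
    by (rule finite_PiE) (auto simp: fin)
  then have "finite (PM t)" using PM_bij[of t] by (simp add: bij_betw_finite)
  ultimately show ?thesis by blast
qed

lemma relaxed_Sigma: "relaxed_trees n = Sigma {t. isize t = n} PM"
  unfolding relaxed_trees_def PM_def Sigma_def by blast


fun GF :: "bt list \<Rightarrow> nat \<Rightarrow> bool \<Rightarrow> nat" where
  "GF [] k f = 1"
| "GF (t # ts) k f = G t k f * GF ts (k + isize t) False"

lemma GF_snoc: "GF (ts @ [t]) k f = GF ts k f * G t (k + sum_list (map isize ts)) (f \<and> ts = [])"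
  by (induction ts arbitrary: k f) (auto simp: algebra_simps)

lemma GF_merge: "GF (ts @ [N l r]) k f = GF (ts @ [l, r]) k f"
proof -
  have "GF (ts @ [l, r]) k f = GF ((ts @ [l]) @ [r]) k f" by simp
  also have "\<dots> = GF ts k f * G l (k + sum_list (map isize ts)) (f \<and> ts = []) *
        G r (k + sum_list (map isize ts) + isize l) False"
    by (simp only: GF_snoc) (simp add: algebra_simps)
  finally show ?thesis by (simp add: GF_snoc algebra_simps)
qed

lemma fin_trees: "finite {t. isize t \<le> n}"
proof (induction n)
  case 0
  have "{t. isize t \<le> 0} \<subseteq> {L}" by (auto elim: isize.elims)
  then show ?case using finite_subset by blast
next
  case (Suc n)
  have "{t. isize t \<le> Suc n} \<subseteq> insert L ((\<lambda>(l,r). N l r) ` ({t. isize t \<le> n} \<times> {t. isize t \<le> n}))"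
  proof
    fix t assume "t \<in> {t. isize t \<le> Suc n}"
    then show "t \<in> insert L ((\<lambda>(l,r). N l r) ` ({t. isize t \<le> n} \<times> {t. isize t \<le> n}))"
      by (cases t) auto
  qed
  then show ?case using Suc finite_subset by blast
qed

definition Forest :: "nat \<Rightarrow> nat \<Rightarrow> bt list set" where
  "Forest a b = {ts. length ts + b = a + 1 \<and> sum_list (map isize ts) = b}"

definition S :: "nat \<Rightarrow> nat \<Rightarrow> nat" where
  "S a b = (\<Sum>ts \<in> Forest a b. GF ts 0 True)"

lemma Forest_finite: "finite (Forest a b)"
proof -
  have "Forest a b \<subseteq> {xs. set xs \<subseteq> {t. isize t \<le> b} \<and> length xs \<le> a + 1}"
  proof
    fix ts assume "ts \<in> Forest a b"
    then have ts: "length ts + b = a + 1" "sum_list (map isize ts) = b" unfolding Forest_def by auto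
    have "isize t \<le> b" if "t \<in> set ts" for t
      using member_le_sum_list[of "isize t" "map isize ts"] that ts by simp
    then show "ts \<in> {xs. set xs \<subseteq> {t. isize t \<le> b} \<and> length xs \<le> a + 1}" using ts by auto
  qed
  then show ?thesis using finite_lists_length_le[OF fin_trees] finite_subset by blast
qed

lemma Forest_00: "Forest 0 0 = {[L]}"
  unfolding Forest_def by (auto simp: length_Suc_conv elim: isize.elims)

lemma Forest_gt: assumes "a < b" shows "Forest a b = {}"
proof -
  { fix ts assume ts: "length ts + b = a+1" "sum_list (map isize ts) = b"
    then have "length ts = 0" using assms by arith
    then have "ts = []" by simp
    then have False using ts assms by simp }
  then show ?thesis unfolding Forest_def by blast
qed

definition TR :: "nat \<Rightarrow> nat \<Rightarrow> (bt list \<times> bt \<times> bt) set" where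
  "TR a b = {(ts,l,r). 0 < b \<and> ts @ [l, r] \<in> Forest a (b-1)}"

lemma Forest_dec:
  assumes "0 < a" "b \<le> a"
  shows "Forest a b = (\<lambda>ts. ts @ [L]) ` Forest (a-1) b \<union> (\<lambda>(ts,l,r). ts @ [N l r]) ` TR a b"
proof (intro equalityI subsetI)
  fix xs assume "xs \<in> Forest a b"
  then have xs: "length xs + b = a + 1" "sum_list (map isize xs) = b" unfolding Forest_def by auto
  have "xs \<noteq> []" using xs assms by auto
  then obtain ts t where xt: "xs = ts @ [t]" by (metis rev_exhaust)
  show "xs \<in> (\<lambda>ts. ts @ [L]) ` Forest (a-1) b \<union> (\<lambda>(ts,l,r). ts @ [N l r]) ` TR a b"
  proof (cases t)
    case L
    then have "ts \<in> Forest (a-1) b" using xs xt assms unfolding Forest_def by auto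
    then show ?thesis using xt L by blast
  next
    case (N l r)
    then have "(ts, l, r) \<in> TR a b" using xs xt assms unfolding Forest_def TR_def by auto
    then show ?thesis using xt N by force
  qed
next
  fix xs assume "xs \<in> (\<lambda>ts. ts @ [L]) ` Forest (a-1) b \<union> (\<lambda>(ts,l,r). ts @ [N l r]) ` TR a b"
  then show "xs \<in> Forest a b" using assms unfolding Forest_def TR_def by auto
qed

lemma Forest_TR:
  assumes "0 < b" "b \<le> a"
  shows "Forest a (b-1) = (\<lambda>(ts,l,r). ts @ [l, r]) ` TR a b"
proof (intro equalityI subsetI)
  fix xs assume xsF: "xs \<in> Forest a (b-1)"
  then have xs: "length xs + (b-1) = a + 1" unfolding Forest_def by auto
  have "xs \<noteq> []" using xs assms by auto
  then obtain ys r where y: "xs = ys @ [r]" by (metis rev_exhaust)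
  have "ys \<noteq> []" using xs assms y by auto
  then obtain ts l where t: "ys = ts @ [l]" by (metis rev_exhaust)
  have "xs = ts @ [l, r]" using y t by simp
  moreover have "(ts, l, r) \<in> TR a b" using xsF assms calculation unfolding TR_def by simp
  ultimately show "xs \<in> (\<lambda>(ts,l,r). ts @ [l, r]) ` TR a b" by force
next
  fix xs assume "xs \<in> (\<lambda>(ts,l,r). ts @ [l, r]) ` TR a b"
  then show "xs \<in> Forest a (b-1)" unfolding TR_def by auto
qed

lemma app2_inj: "ts @ [l, r] = ts' @ [l', r'] \<Longrightarrow> ts = ts' \<and> l = l' \<and> r = r'"
proof -
  assume "ts @ [l, r] = ts' @ [l', r']"
  then have "(ts @ [l]) @ [r] = (ts' @ [l']) @ [r']" by simp
  then show ?thesis by (metis append1_eq_conv)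
qed

lemma S_rec:
  assumes "0 < a" "b \<le> a"
  shows "S a b = (b+1) * S (a-1) b + (if 0 < b then S a (b-1) else 0)"
proof -
  let ?FL = "(\<lambda>ts. ts @ [L]) ` Forest (a-1) b"
  let ?FN = "(\<lambda>(ts,l,r). ts @ [N l r]) ` TR a b"
  have fin: "finite ?FL" "finite ?FN"
    using Forest_finite[of a b] Forest_dec[OF assms] by (metis finite_Un)+
  have disj: "?FL \<inter> ?FN = {}" by auto
  have injL: "inj_on (\<lambda>ts. ts @ [L]) X" for X by (auto simp: inj_on_def)
  have injN: "inj_on (\<lambda>(ts,l,r). ts @ [N l r]) X" for X by (auto simp: inj_on_def)
  have injM: "inj_on (\<lambda>(ts,l,r). ts @ [l, r]) X" for X
    by (auto simp: inj_on_def dest: app2_inj)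
  have SL: "(\<Sum>xs\<in>?FL. GF xs 0 True) = (b+1) * S (a-1) b"
  proof -
    have "(\<Sum>xs\<in>?FL. GF xs 0 True) = (\<Sum>ts\<in>Forest (a-1) b. GF (ts @ [L]) 0 True)"
      by (simp add: sum.reindex[OF injL])
    also have "\<dots> = (\<Sum>ts\<in>Forest (a-1) b. (b+1) * GF ts 0 True)"
    proof (rule sum.cong)
      fix ts assume "ts \<in> Forest (a-1) b"
      then have "ts \<noteq> []" "sum_list (map isize ts) = b" using assms unfolding Forest_def by auto
      then show "GF (ts @ [L]) 0 True = (b+1) * GF ts 0 True" by (simp add: GF_snoc)
    qed simp
    finally show ?thesis unfolding S_def by (simp add: sum_distrib_left)
  qed
  have SN: "(\<Sum>xs\<in>?FN. GF xs 0 True) = (if 0 < b then S a (b-1) else 0)"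
  proof (cases "0 < b")
    case True
    have "(\<Sum>xs\<in>?FN. GF xs 0 True) = (\<Sum>(ts,l,r)\<in>TR a b. GF (ts @ [N l r]) 0 True)"
      by (subst sum.reindex[OF injN]) (simp add: case_prod_unfold comp_def)
    also have "\<dots> = (\<Sum>(ts,l,r)\<in>TR a b. GF (ts @ [l, r]) 0 True)"
      by (simp only: GF_merge)
    also have "\<dots> = (\<Sum>xs\<in>(\<lambda>(ts,l,r). ts @ [l, r]) ` TR a b. GF xs 0 True)"
      by (subst sum.reindex[OF injM]) (simp add: case_prod_unfold comp_def)
    also have "\<dots> = S a (b-1)" unfolding S_def using Forest_TR[OF True assms(2)] by simp
    finally show ?thesis using True by simp
  next
    case False
    then have "TR a b = {}" by (simp add: TR_def)
    then show ?thesis using False by simp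
  qed
  have "S a b = (\<Sum>xs\<in>?FL \<union> ?FN. GF xs 0 True)" unfolding S_def using Forest_dec[OF assms] by simp
  also have "\<dots> = (\<Sum>xs\<in>?FL. GF xs 0 True) + (\<Sum>xs\<in>?FN. GF xs 0 True)"
    by (rule sum.union_disjoint[OF fin disj])
  finally show ?thesis using SL SN by simp
qed

lemma S_R: "\<forall>a b. a + b = s \<longrightarrow> S a b = R a b"
proof (induction s)
  case 0
  then show ?case by (simp add: S_def Forest_00)
next
  case (Suc n)
  show ?case
  proof (intro allI impI)
    fix a b assume ab: "a + b = Suc n"
    show "S a b = R a b"
    proof (cases "b \<le> a")
      case False
      then show ?thesis by (simp add: S_def Forest_gt R_zero)
    next
      case True
      then have a0: "0 < a" using ab by simp
      have IH1: "0 < b \<Longrightarrow> S a (b-1) = R a (b-1)"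
        using Suc.IH ab by (metis One_nat_def Suc_pred add_Suc_right nat.inject)
      have IH2: "S (a-1) b = R (a-1) b"
        using Suc.IH ab a0 by (metis One_nat_def Suc_pred add_Suc nat.inject)
      show ?thesis using S_rec[OF a0 True] R_rec[OF a0, of b] True IH1 IH2 by (simp add: algebra_simps)
    qed
  qed
qed

lemma trees_S: "(\<Sum>t\<in>{t. isize t = n}. G t 0 True) = S n n"
proof -
  have F: "Forest n n = (\<lambda>t. [t]) ` {t. isize t = n}"
    unfolding Forest_def by (auto simp: length_Suc_conv)
  have inj: "inj_on (\<lambda>t::bt. [t]) X" for X by (auto simp: inj_on_def)
  show ?thesis unfolding S_def F by (simp add: sum.reindex[OF inj])
qed


theorem corollary3p3:
  shows "(\<forall>n m. m \<le> n \<longrightarrow> even (n + m) \<longrightarrow>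
            dnm n m = real (rab ((n + m) div 2) ((n - m) div 2)) / fact ((n + m) div 2))
       \<and> (\<forall>n m. m \<le> n \<longrightarrow> odd (n + m) \<longrightarrow> dnm n m = 0)
       \<and> (\<forall>n. real (card (relaxed_trees n)) = fact n * dnm (2 * n) 0)"
proof (intro conjI allI impI)
  fix n m :: nat assume "m \<le> n" "even (n + m)"
  then show "dnm n m = real (rab ((n + m) div 2) ((n - m) div 2)) / fact ((n + m) div 2)"
    using part1 by (simp add: rab_R)
next
  fix n m :: nat assume "m \<le> n" "odd (n + m)"
  then show "dnm n m = 0" using dnm_zero by blast
next
  fix n :: nat
  have fin: "finite {t. isize t = n}"
    using fin_trees[of n] by (rule finite_subset[rotated]) auto
  have "card (relaxed_trees n) = (\<Sum>t\<in>{t. isize t = n}. card (PM t))"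
    unfolding relaxed_Sigma using fin PM_card by (simp add: card_SigmaI)
  also have "\<dots> = (\<Sum>t\<in>{t. isize t = n}. G t 0 True)" using PM_card by simp
  also have "\<dots> = R n n" using trees_S S_R by simp
  finally have c: "card (relaxed_trees n) = R n n" .
  have "dnm (2 * n) 0 = real (R n n) / fact n" using part1[of 0 "2 * n"] by simp
  then show "real (card (relaxed_trees n)) = fact n * dnm (2 * n) 0" using c by simp
qed

end
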